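(* Let $\mathbf{B}\in\dot{\mathbb{P}}(\mathbb{L}(\mathbf{C}))$ with $|\mathbf{B}|=|\mathbf{C}|$. Then $\mathbf{B}$ is a minimal sufficient cause for $D$ relative to $\mathbf{C}$ for some individual $\omega^*\in\Omega$ if and only if $\mathbf{B}$ is irreducible for $\mathcal{D}(\mathbf{C},\Omega)$.
   Context: An event is a binary random variable on a population $\Omega$; $\overline{X}=1-X$; $\mathbb{L}(\mathbf{C})=\mathbf{C}\cup\{\overline{X}:X\in\mathbf{C}\}$; $\dot{\mathbb{P}}(\mathbb{L}(\mathbf{C}))$ is the set of subsets of $\mathbb{L}(\mathbf{C})$ not containing both $X$ and $\overline{X}$ for any $X$; $(L)_{\mathbf{c}}$ is the value of literal $L$ under assignment $\mathbf{c}$ to $\mathbf{C}$; $\bigwedge(\mathbf{B})=\min_{L\in\mathbf{B}}L$. Potential outcomes $\mathcal{D}(\mathbf{C},\Omega)$: values $D_{\mathbf{c}}(\omega)\in\{0,1\}$ for all $\omega\in\Omega$ and assignments $\mathbf{c}$. A set $\mathbf{B}\subseteq\mathbb{L}(\mathbf{C})$ is a sufficient cause for $D$ relative to $\mathbf{C}$ in a nonempty $\Omega^*\subseteq\Omega$ if there exists $\mathbf{c}^*$ with $(\bigwedge(\mathbf{B}))_{\mathbf{c}^*}=1$ and for all $\mathbf{c}$ with $(\bigwedge(\mathbf{B}))_{\mathbf{c}}=1$ one has $D_{\mathbf{c}}(\omega)=1$ for all $\omega\in\Omega^*$; it is a minimal sufficient cause if in addition no proper subset of $\mathbf{B}$ is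 a sufficient cause for $D$ in $\Omega^*$. "For $\omega^*$" means $\Omega^*=\{\omega^*\}$. A sufficient cause representation $(\mathbf{A},\mathfrak{B})$ for $\mathcal{D}(\mathbf{C},\Omega)$ is a tuple $\mathbf{A}=\langle A_1,\dots,A_p\rangle$ of binary random variables on $\Omega$ unaffected by interventions on $\mathbf{C}$ and a tuple $\mathfrak{B}=\langle\mathbf{B}_1,\dots,\mathbf{B}_p\rangle$, $\mathbf{B}_i\in\dot{\mathbb{P}}(\mathbb{L}(\mathbf{C}))$, such that for all $\omega,\mathbf{c}$: $D_{\mathbf{c}}(\omega)=1$ iff some $j$ has $A_j(\omega)=1$ and $(\bigwedge(\mathbf{B}_j))_{\mathbf{c}}=1$. $\mathbf{B}\in\dot{\mathbb{P}}(\mathbb{L}(\mathbf{C}))$ is irreducible for $\mathcal{D}(\mathbf{C},\Omega)$ if in every such representation some $\mathbf{B}_i\in\mathfrak{B}$ satisfies $\mathbf{B}\subseteq\mathbf{B}_i$. *)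

theory Defs
  imports "HOL-Library.FuncSet"
begin

text \<open>Literals over variables of type 'v: (X, True) stands for X, (X, False) for its
complement 1 - X.  Truth values 0/1 are rendered as False/True.\<close>

type_synonym 'v literal = "'v \<times> bool"

definition lits :: "'v set \<Rightarrow> 'v literal set" where
  "lits C = C \<times> (UNIV :: bool set)"

definition Pdot :: "'v set \<Rightarrow> 'v literal set set" where
  "Pdot C = {B. B \<subseteq> lits C \<and> (\<forall>X. \<not> ((X, True) \<in> B \<and> (X, False) \<in> B))}"

definition assignments :: "'v set \<Rightarrow> ('v \<Rightarrow> bool) set" where
  "assignments C = C \<rightarrow>\<^sub>E (UNIV :: bool set)"

definition lit_val :: "'v literal \<Rightarrow> ('v \<Rightarrow> bool) \<Rightarrow> bool" where
  "lit_val L c = (c (fst L) = snd L)"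

definition conj_val :: "'v literal set \<Rightarrow> ('v \<Rightarrow> bool) \<Rightarrow> bool" where
  "conj_val B c = (\<forall>L\<in>B. lit_val L c)"

text \<open>Potential outcomes: D c \<omega> is D_c(\<omega>).\<close>
definition sufficient_cause ::
  "'v set \<Rightarrow> (('v \<Rightarrow> bool) \<Rightarrow> 'w \<Rightarrow> bool) \<Rightarrow> 'w set \<Rightarrow> 'v literal set \<Rightarrow> bool" where
  "sufficient_cause C D \<Omega>s B \<longleftrightarrow>
     \<Omega>s \<noteq> {} \<and>
     (\<exists>c\<in>assignments C. conj_val B c) \<and>
     (\<forall>c\<in>assignments C. conj_val B c \<longrightarrow> (\<forall>\<omega>\<in>\<Omega>s. D c \<omega>))"

definition minimal_sufficient_cause ::
  "'v set \<Rightarrow> (('v \<Rightarrow> bool) \<Rightarrow> 'w \<Rightarrow> bool) \<Rightarrow> 'w set \<Rightarrow> 'v literal set \<Rightarrow> bool" where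
  "minimal_sufficient_cause C D \<Omega>s B \<longleftrightarrow>
     sufficient_cause C D \<Omega>s B \<and> (\<forall>B'. B' \<subset> B \<longrightarrow> \<not> sufficient_cause C D \<Omega>s B')"

text \<open>A sufficient cause representation: a list of pairs (A_j, B_j), with A_j a binary
random variable on \<Omega> (not depending on the assignment) and B_j \<in> Pdot C.\<close>
definition sc_representation ::
  "'v set \<Rightarrow> 'w set \<Rightarrow> (('v \<Rightarrow> bool) \<Rightarrow> 'w \<Rightarrow> bool) \<Rightarrow>
   (('w \<Rightarrow> bool) \<times> 'v literal set) list \<Rightarrow> bool" where
  "sc_representation C \<Omega> D R \<longleftrightarrow>
     (\<forall>j<length R. snd (R ! j) \<in> Pdot C) \<and>
     (\<forall>\<omega>\<in>\<Omega>. \<forall>c\<in>assignments C.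
        D c \<omega> \<longleftrightarrow> (\<exists>j<length R. fst (R ! j) \<omega> \<and> conj_val (snd (R ! j)) c))"

definition irreducible ::
  "'v set \<Rightarrow> 'w set \<Rightarrow> (('v \<Rightarrow> bool) \<Rightarrow> 'w \<Rightarrow> bool) \<Rightarrow> 'v literal set \<Rightarrow> bool" where
  "irreducible C \<Omega> D B \<longleftrightarrow>
     (\<forall>R. sc_representation C \<Omega> D R \<longrightarrow> (\<exists>j<length R. B \<subseteq> snd (R ! j)))"

end

theory Submission
  imports Defs
begin

definition full :: "'v set \<Rightarrow> ('v \<Rightarrow> bool) \<Rightarrow> 'v literal set" where
  "full C c = (\<lambda>X. (X, c X)) ` C"

lemma F1:
  assumes "c \<in> assignments C" "c' \<in> assignments C"
  shows "conj_val (full C c) c' \<longleftrightarrow> c' = c"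
proof
  assume h: "conj_val (full C c) c'"
  show "c' = c"
  proof
    fix X show "c' X = c X"
    proof (cases "X \<in> C")
      case True then show ?thesis using h by (auto simp: conj_val_def full_def lit_val_def)
    next
      case False then show ?thesis using assms by (auto simp: assignments_def PiE_def extensional_def)
    qed
  qed
qed (auto simp: conj_val_def full_def lit_val_def)

lemma F2:
  assumes "B \<in> Pdot C" "conj_val B c"
  shows "B \<subseteq> full C c"
proof
  fix L assume L: "L \<in> B"
  then have "fst L \<in> C" using assms(1) by (auto simp: Pdot_def lits_def)
  moreover have "c (fst L) = snd L" using assms(2) L by (auto simp: conj_val_def lit_val_def)
  ultimately have "L = (fst L, c (fst L))" "fst L \<in> C" by auto
  then show "L \<in> full C c" unfolding full_def by (rule image_eqI)
qed

lemma F3: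
  assumes "finite C" "card B = card C" "B \<subseteq> full C c"
  shows "B = full C c"
proof -
  have fin: "finite (full C c)" using assms(1) by (simp add: full_def)
  have "card (full C c) \<le> card C" using assms(1) unfolding full_def by (rule card_image_le)
  then have "card (full C c) \<le> card B" using assms(2) by simp
  then show ?thesis using card_seteq[OF fin assms(3)] by simp
qed

lemma full_Pdot: "full C c \<in> Pdot C"
  by (auto simp: full_def Pdot_def lits_def)

theorem mainTheorem3:
  fixes C :: "'v set" and \<Omega> :: "'w set" and D :: "('v \<Rightarrow> bool) \<Rightarrow> 'w \<Rightarrow> bool"
    and B :: "'v literal set"
  assumes "finite C"
    and "B \<in> Pdot C"
    and "card B = card C"
  shows "(\<exists>\<omega>\<in>\<Omega>. minimal_sufficient_cause C D {\<omega>} B) \<longleftrightarrow> irreducible C \<Omega> D B"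
proof
  assume "\<exists>\<omega>\<in>\<Omega>. minimal_sufficient_cause C D {\<omega>} B"
  then obtain \<omega> where w: "\<omega> \<in> \<Omega>" and m: "minimal_sufficient_cause C D {\<omega>} B" by blast
  from m obtain c where c: "c \<in> assignments C" "conj_val B c" and Dc: "D c \<omega>"
    by (auto simp: minimal_sufficient_cause_def sufficient_cause_def)
  have Bf: "B = full C c" using F3[OF assms(1) assms(3) F2[OF assms(2) c(2)]] .
  show "irreducible C \<Omega> D B" unfolding irreducible_def
  proof (intro allI impI)
    fix R assume R: "sc_representation C \<Omega> D R"
    then obtain j where j: "j < length R" "fst (R ! j) \<omega>" "conj_val (snd (R ! j)) c"
      using w c(1) Dc by (auto simp: sc_representation_def)
    have P: "snd (R ! j) \<in> Pdot C" using R j(1) by (auto simp: sc_representation_def)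
    have sub: "snd (R ! j) \<subseteq> B" using F2[OF P j(3)] Bf by simp
    have "snd (R ! j) = B"
    proof (rule ccontr)
      assume "snd (R ! j) \<noteq> B"
      then have ps: "snd (R ! j) \<subset> B" using sub by auto
      have "sufficient_cause C D {\<omega>} (snd (R ! j))"
        unfolding sufficient_cause_def
        using c(1) j R w by (auto simp: sc_representation_def)
      then show False using m ps by (auto simp: minimal_sufficient_cause_def)
    qed
    then show "\<exists>j<length R. B \<subseteq> snd (R ! j)" using j(1) by auto
  qed
next
  assume irr: "irreducible C \<Omega> D B"
  show "\<exists>\<omega>\<in>\<Omega>. minimal_sufficient_cause C D {\<omega>} B"
  proof (rule ccontr)
    assume nm: "\<not> (\<exists>\<omega>\<in>\<Omega>. minimal_sufficient_cause C D {\<omega>} B)"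
    define S1 where "S1 = (\<lambda>c. (\<lambda>\<omega>. D c \<omega>, full C c)) ` {c\<in>assignments C. full C c \<noteq> B}"
    define S2 where "S2 = (\<lambda>B'. (\<lambda>\<omega>. \<forall>c\<in>assignments C. conj_val B' c \<longrightarrow> D c \<omega>, B')) ` {B'. B' \<subset> B}"
    have finA: "finite (assignments C)" using assms(1) by (simp add: assignments_def finite_PiE)
    have finB: "finite B" using assms(2) assms(1) by (auto simp: Pdot_def lits_def intro: finite_subset)
    have "finite {B'. B' \<subset> B}" 
      by (rule finite_subset[of _ "Pow B"]) (auto simp: finB)
    then have "finite (S1 \<union> S2)" unfolding S1_def S2_def using finA by auto
    then obtain R where R: "set R = S1 \<union> S2" using finite_list by blast
    have ex: "\<And>P. (\<exists>j<length R. P (R ! j)) \<longleftrightarrow> (\<exists>p\<in>set R. P p)"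
      by (metis in_set_conv_nth)
    have rep: "sc_representation C \<Omega> D R"
      unfolding sc_representation_def
    proof (intro conjI ballI)
      show "\<forall>j<length R. snd (R ! j) \<in> Pdot C"
      proof (intro allI impI)
        fix j assume "j < length R"
        then have "R ! j \<in> S1 \<union> S2" using R nth_mem by metis
        then show "snd (R ! j) \<in> Pdot C"
        proof
          assume "R ! j \<in> S1" then obtain c where "snd (R ! j) = full C c" unfolding S1_def by (elim imageE) simp
          then show ?thesis by (simp add: full_Pdot)
        next
          assume "R ! j \<in> S2"
          then obtain B' where "B' \<subset> B" "snd (R ! j) = B'" unfolding S2_def by (elim imageE) simp
          then show ?thesis using assms(2) unfolding Pdot_def by auto
        qed
      qed
    next
      fix \<omega> c assume w: "\<omega> \<in> \<Omega>" and c: "c \<in> assignments C"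
      have "D c \<omega> = (\<exists>p\<in>S1 \<union> S2. fst p \<omega> \<and> conj_val (snd p) c)"
      proof
        assume Dc: "D c \<omega>"
        show "\<exists>p\<in>S1 \<union> S2. fst p \<omega> \<and> conj_val (snd p) c"
        proof (cases "full C c = B")
          case False
          then have "(\<lambda>\<omega>. D c \<omega>, full C c) \<in> S1" using c by (auto simp: S1_def)
          then show ?thesis using Dc F1[OF c c] by force
        next
          case True
          have sc: "sufficient_cause C D {\<omega>} B"
            unfolding sufficient_cause_def using c Dc True F1[OF c] by auto
          then obtain B' where B': "B' \<subset> B" "sufficient_cause C D {\<omega>} B'"
            using nm w by (auto simp: minimal_sufficient_cause_def)
          have cv: "conj_val B' c" using B'(1) True F1[OF c c]
            by (auto simp: conj_val_def)
          have mem: "(\<lambda>\<omega>. \<forall>c\<in>assignments C. conj_val B' c \<longrightarrow> D c \<omega>, B') \<in> S2"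
            using B'(1) by (auto simp: S2_def)
          have al: "\<forall>c\<in>assignments C. conj_val B' c \<longrightarrow> D c \<omega>"
            using B'(2) by (simp add: sufficient_cause_def)
          show "\<exists>p\<in>S1 \<union> S2. fst p \<omega> \<and> conj_val (snd p) c"
            apply (rule bexI[OF _ UnI2[OF mem]])
            using al cv by simp
        qed
      next
        assume "\<exists>p\<in>S1 \<union> S2. fst p \<omega> \<and> conj_val (snd p) c"
        then obtain p where p: "p \<in> S1 \<union> S2" "fst p \<omega>" "conj_val (snd p) c" by blast
        from p(1) show "D c \<omega>"
        proof
          assume "p \<in> S1"
          then obtain c0 where c0: "c0 \<in> assignments C" "p = (\<lambda>\<omega>. D c0 \<omega>, full C c0)"
            unfolding S1_def by blast
          then have "c = c0" using F1[OF c0(1) c] p(3) by simp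
          then show ?thesis using p(2) c0 by simp
        next
          assume "p \<in> S2"
          then obtain B' where "p = (\<lambda>\<omega>. \<forall>c\<in>assignments C. conj_val B' c \<longrightarrow> D c \<omega>, B')"
            unfolding S2_def by blast
          then show ?thesis using p(2,3) c by simp
        qed
      qed
      then show "D c \<omega> = (\<exists>j<length R. fst (R ! j) \<omega> \<and> conj_val (snd (R ! j)) c)"
        using ex[of "\<lambda>p. fst p \<omega> \<and> conj_val (snd p) c"] R by simp
    qed
    then obtain j where j: "j < length R" "B \<subseteq> snd (R ! j)" using irr by (auto simp: irreducible_def)
    then have mem: "R ! j \<in> S1 \<union> S2" using R nth_mem by metis
    show False
    proof (cases "R ! j \<in> S1")
      case True
      then obtain c where "c \<in> assignments C" "full C c \<noteq> B" "snd (R ! j) = full C c"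
        unfolding S1_def by (elim imageE) auto
      then show False using F3[OF assms(1) assms(3)] j(2) by metis
    next
      case False
      then have "R ! j \<in> S2" using mem by auto
      then have "snd (R ! j) \<subset> B" unfolding S2_def by (elim imageE) simp
      then show False using j(2) by auto
    qed
  qed
qed

end
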